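(* The class $K^F$ is faithful: whenever $(\Gamma_1,X_1),(\Gamma_2,X_2)\in K^F$ and $\Phi\colon\Gamma_1\to\Gamma_2$ is an isomorphism of abstract groups, there exists a homeomorphism $\phi\colon X_1\to X_2$ such that $\Phi(\gamma)=\phi\circ\gamma\circ\phi^{-1}$ for every $\gamma\in\Gamma_1$.
   Context: A Boolean space is a Hausdorff space with a basis of compact open sets. For a space $X$, $\operatorname{supp}(\phi)$ is the closure of $\{x:\phi(x)\ne x\}$, and $\operatorname{Homeo}_c(X)$ is the set of homeomorphisms of $X$ whose support is compact and open. A space-group pair is $(\Gamma,X)$ with $X$ a Boolean space and $\Gamma$ a subgroup of $\operatorname{Homeo}(X)$ contained in $\operatorname{Homeo}_c(X)$. The class $K^F$ consists of all such pairs satisfying: (F1) for any $x\in X$ and clopen neighbourhood $A$ of $x$, there is $\alpha\in\Gamma\setminus\{1\}$ with $\alpha^2=1$, $x\in\operatorname{supp}(\alpha)$ and $\operatorname{supp}(\alpha)\subseteq A$; (F2) for any $\alpha\in\Gamma\setminus\{1\}$ with $\alpha^2=1$ and any non-empty clopen $A\subseteq\operatorname{supp}(\alpha)$, there is $\beta\in\Gamma\setminus\{1\}$ with $\operatorname{supp}(\beta)\subseteq A\cup\alpha(A)$ and $\alpha(x)=\beta(x)$ for all $x\in\operatorname{supp}(\beta)$; (F3) for any non-empty clopen $A\subseteq X$ there is $\alpha\in\Gamma$ with $\operatorname{supp}(\alpha)\subseteq A$ and $\alpha^2\ne1$. *)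

theory Defs
  imports "HOL-Analysis.Analysis"
begin

definition boolean_space :: "'a::topological_space itself \<Rightarrow> bool" where
  "boolean_space TYPE('a) \<longleftrightarrow>
     (\<forall>x y::'a. x \<noteq> y \<longrightarrow> (\<exists>U V. open U \<and> open V \<and> x \<in> U \<and> y \<in> V \<and> U \<inter> V = {}))
     \<and> topological_basis {B::'a set. compact B \<and> open B}"

definition supp :: "('a::topological_space \<Rightarrow> 'a) \<Rightarrow> 'a set" where
  "supp f = closure {x. f x \<noteq> x}"

definition Homeo :: "('a::topological_space \<Rightarrow> 'a) set" where
  "Homeo = {f. homeomorphism UNIV UNIV f (inv f)}"

definition Homeo_c :: "('a::topological_space \<Rightarrow> 'a) set" where
  "Homeo_c = {f \<in> Homeo. compact (supp f) \<and> open (supp f)}"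

definition clopen_set :: "'a::topological_space set \<Rightarrow> bool" where
  "clopen_set A \<longleftrightarrow> open A \<and> closed A"

definition homeo_subgroup :: "('a::topological_space \<Rightarrow> 'a) set \<Rightarrow> bool" where
  "homeo_subgroup \<Gamma> \<longleftrightarrow> \<Gamma> \<subseteq> Homeo \<and> id \<in> \<Gamma> \<and>
     (\<forall>f\<in>\<Gamma>. \<forall>g\<in>\<Gamma>. f \<circ> g \<in> \<Gamma>) \<and> (\<forall>f\<in>\<Gamma>. inv f \<in> \<Gamma>)"

definition space_group_pair :: "('a::topological_space \<Rightarrow> 'a) set \<Rightarrow> bool" where
  "space_group_pair \<Gamma> \<longleftrightarrow> boolean_space TYPE('a) \<and> homeo_subgroup \<Gamma> \<and> \<Gamma> \<subseteq> Homeo_c"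

definition class_KF :: "('a::topological_space \<Rightarrow> 'a) set \<Rightarrow> bool" where
  "class_KF \<Gamma> \<longleftrightarrow> space_group_pair \<Gamma> \<and>
    \<comment> \<open>(F1)\<close>
    (\<forall>x A. clopen_set A \<and> x \<in> A \<longrightarrow>
       (\<exists>\<alpha>\<in>\<Gamma>. \<alpha> \<noteq> id \<and> \<alpha> \<circ> \<alpha> = id \<and> x \<in> supp \<alpha> \<and> supp \<alpha> \<subseteq> A)) \<and>
    \<comment> \<open>(F2)\<close>
    (\<forall>\<alpha>\<in>\<Gamma>. \<forall>A. \<alpha> \<noteq> id \<and> \<alpha> \<circ> \<alpha> = id \<and> clopen_set A \<and> A \<noteq> {} \<and> A \<subseteq> supp \<alpha> \<longrightarrow>
       (\<exists>\<beta>\<in>\<Gamma>. \<beta> \<noteq> id \<and> supp \<beta> \<subseteq> A \<union> \<alpha> ` A \<and> (\<forall>x\<in>supp \<beta>. \<alpha> x = \<beta> x))) \<and>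
    \<comment> \<open>(F3)\<close>
    (\<forall>A. clopen_set A \<and> A \<noteq> {} \<longrightarrow> (\<exists>\<alpha>\<in>\<Gamma>. supp \<alpha> \<subseteq> A \<and> \<alpha> \<circ> \<alpha> \<noteq> id))"

definition group_iso ::
  "(('a \<Rightarrow> 'a) \<Rightarrow> ('b \<Rightarrow> 'b)) \<Rightarrow> ('a \<Rightarrow> 'a) set \<Rightarrow> ('b \<Rightarrow> 'b) set \<Rightarrow> bool" where
  "group_iso \<Phi> \<Gamma>1 \<Gamma>2 \<longleftrightarrow> bij_betw \<Phi> \<Gamma>1 \<Gamma>2 \<and>
     (\<forall>g\<in>\<Gamma>1. \<forall>h\<in>\<Gamma>1. \<Phi> (g \<circ> h) = \<Phi> g \<circ> \<Phi> h)"

end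

theory Submission
  imports Defs
begin

definition mov :: "('a \<Rightarrow> 'a) \<Rightarrow> 'a set" where
  "mov f = {x. f x \<noteq> x}"

definition commutes :: "('a \<Rightarrow> 'a) \<Rightarrow> ('a \<Rightarrow> 'a) \<Rightarrow> bool" where
  "commutes f g \<longleftrightarrow> f \<circ> g = g \<circ> f"

definition restr :: "('a \<Rightarrow> 'a) \<Rightarrow> ('a \<Rightarrow> 'a) \<Rightarrow> bool" where
  "restr b a \<longleftrightarrow> b \<circ> b = id \<and> (\<forall>y. b y \<noteq> y \<longrightarrow> b y = a y)"

definition LeR :: "('a \<Rightarrow> 'a) set \<Rightarrow> ('a \<Rightarrow> 'a) \<Rightarrow> ('a \<Rightarrow> 'a) \<Rightarrow> bool" where
  "LeR G b a \<longleftrightarrow> b \<circ> b = id \<and> (\<forall>h\<in>G. commutes h a \<longrightarrow> commutes (h \<circ> b \<circ> inv h) b)"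

definition DisjR :: "('a \<Rightarrow> 'a) set \<Rightarrow> ('a \<Rightarrow> 'a) \<Rightarrow> ('a \<Rightarrow> 'a) \<Rightarrow> bool" where
  "DisjR G a c \<longleftrightarrow> (\<forall>b\<in>G. LeR G b a \<longrightarrow> commutes b c) \<and>
                   (\<forall>b\<in>G. LeR G b a \<and> LeR G b c \<longrightarrow> b = id)"

lemma mov_supp: "mov f \<subseteq> supp f"
  unfolding mov_def supp_def by (rule closure_subset)

lemma not_supp_fix: "x \<notin> supp f \<Longrightarrow> f x = x"
  using mov_supp[of f] unfolding mov_def by auto

lemma closure_nhds: "x \<in> closure M \<longleftrightarrow> (\<forall>U. open U \<longrightarrow> x \<in> U \<longrightarrow> U \<inter> M \<noteq> {})"
  unfolding closure_iff_nhds_not_empty by blast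

lemma disj_mov_commute:
  assumes "inj f" "inj g" "mov f \<inter> mov g = {}"
  shows "commutes f g"
  unfolding commutes_def
proof
  fix x
  show "(f \<circ> g) x = (g \<circ> f) x"
  proof (cases "f x = x")
    case True
    show ?thesis
    proof (cases "g x = x")
      case True with \<open>f x = x\<close> show ?thesis by simp
    next
      case False
      then have "g (g x) \<noteq> g x" using assms(2) False by (simp add: inj_eq)
      then have "f (g x) = g x" using assms(3) False unfolding mov_def by blast
      then show ?thesis using \<open>f x = x\<close> by simp
    qed
  next
    case False
    then have "f (f x) \<noteq> f x" using assms(1) False by (simp add: inj_eq)
    then have "g (f x) = f x" using assms(3) unfolding mov_def by blast
    moreover have "g x = x" using False assms(3) unfolding mov_def by blast
    ultimately show ?thesis by simp
  qed
qed

lemma restr_commute: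
  assumes "restr b1 a" "restr b2 a" "a \<circ> a = id"
  shows "commutes b1 b2"
  unfolding commutes_def
proof
  fix y
  have a2: "a (a z) = z" for z using fun_cong[OF assms(3), of z] by simp
  have i1: "b1 (b1 z) = z" for z using assms(1) unfolding restr_def by (simp add: fun_eq_iff)
  have i2: "b2 (b2 z) = z" for z using assms(2) unfolding restr_def by (simp add: fun_eq_iff)
  have r1: "b1 z \<noteq> z \<Longrightarrow> b1 z = a z" for z using assms(1) unfolding restr_def by blast
  have r2: "b2 z \<noteq> z \<Longrightarrow> b2 z = a z" for z using assms(2) unfolding restr_def by blast
  show "(b1 \<circ> b2) y = (b2 \<circ> b1) y"
  proof (cases "b1 y = y")
    case T1: True
    show ?thesis
    proof (cases "b2 y = y")
      case True with T1 show ?thesis by simp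
    next
      case False
      have "b1 (a y) = a y"
      proof (rule ccontr)
        assume "b1 (a y) \<noteq> a y"
        then have "b1 (a y) = y" using r1[of "a y"] a2[of y] by simp
        then have "b1 y = a y" using i1[of "a y"] by simp
        then show False using T1 False r2[of y] by simp
      qed
      then show ?thesis using T1 False r2 by simp
    qed
  next
    case F1: False
    show ?thesis
    proof (cases "b2 y = y")
      case True
      have "b2 (a y) = a y"
      proof (rule ccontr)
        assume "b2 (a y) \<noteq> a y"
        then have "b2 (a y) = y" using r2[of "a y"] a2[of y] by simp
        then have "b2 y = a y" using i2[of "a y"] by simp
        then show False using True F1 r1[of y] by simp
      qed
      then show ?thesis using True F1 r1 by simp
    next
      case False
      have e1: "b1 y = a y" using F1 r1 by blast
      have e2: "b2 y = a y" using False r2 by blast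
      note e = e1 e2
      have "b1 (a y) = y" using e i1[of y] by simp
      moreover have "b2 (a y) = y" using e i2[of y] by simp
      ultimately show ?thesis using e by simp
    qed
  qed
qed

lemma noncommute_lemma:
  assumes "inj h" "b \<circ> b = id" "h w' = w" "h (b w) = b w" "h (b w') = b w'" "h w \<noteq> w'"
  shows "\<not> commutes (h \<circ> b \<circ> inv h) b"
proof
  assume c: "commutes (h \<circ> b \<circ> inv h) b"
  have bb: "b (b z) = z" for z using fun_cong[OF assms(2), of z] by simp
  have iw: "inv h w = w'" using inv_f_f[OF assms(1), of w'] assms(3) by simp
  have ibw: "inv h (b w) = b w" using inv_f_f[OF assms(1), of "b w"] assms(4) by simp
  have "((h \<circ> b \<circ> inv h) \<circ> b) w = (b \<circ> (h \<circ> b \<circ> inv h)) w"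
    using c unfolding commutes_def by simp
  then have "(h \<circ> b \<circ> inv h) (b w) = b ((h \<circ> b \<circ> inv h) w)" by simp
  then have "h w = b (h (b w'))" using iw bb ibw by simp
  then have "h w = w'" using assms(5) bb by simp
  then show False using assms(6) by simp
qed


locale KF =
  fixes G :: "('a::topological_space \<Rightarrow> 'a) set"
  assumes KF: "class_KF G"
begin

lemma sgp: "space_group_pair G"
  using KF unfolding class_KF_def by (elim conjE)

lemma bool_sp: "boolean_space TYPE('a)"
  using sgp unfolding space_group_pair_def by (elim conjE)

lemma hausdorff: "x \<noteq> y \<Longrightarrow> \<exists>U V. open U \<and> open V \<and> x \<in> U \<and> y \<in> V \<and> U \<inter> V = {}"
  for x y :: 'a
  using bool_sp unfolding boolean_space_def by (elim conjE) blast

lemma basis: "topological_basis {B::'a set. compact B \<and> open B}"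
  using bool_sp unfolding boolean_space_def by (elim conjE)

lemma Hsp: "Hausdorff_space (euclidean :: 'a topology)"
  unfolding Hausdorff_space_def disjnt_def
proof (intro allI impI)
  fix x y :: 'a
  assume "x \<in> topspace euclidean \<and> y \<in> topspace euclidean \<and> x \<noteq> y"
  then have "x \<noteq> y" by simp
  then obtain U V where UV: "open U" "open V" "x \<in> U" "y \<in> V" "U \<inter> V = {}"
    using hausdorff by meson
  show "\<exists>U V. openin euclidean U \<and> openin euclidean V \<and> x \<in> U \<and> y \<in> V \<and> U \<inter> V = {}"
    apply (rule exI[of _ U], rule exI[of _ V]) using UV by simp
qed

lemma compact_closed: "compact (K::'a set) \<Longrightarrow> closed K"
  using compactin_imp_closedin[OF Hsp, of K] by simp

lemma clopen_nbhd:
  assumes "open U" "x \<in> U"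
  shows "\<exists>W. clopen_set W \<and> x \<in> W \<and> W \<subseteq> (U::'a set)"
proof -
  obtain B where "B \<in> {B::'a set. compact B \<and> open B}" "x \<in> B" "B \<subseteq> U"
    using topological_basisE[OF basis assms] by blast
  then show ?thesis using compact_closed unfolding clopen_set_def by blast
qed

lemma sep_clopen:
  assumes "x \<noteq> (y::'a)"
  shows "\<exists>A. clopen_set A \<and> x \<in> A \<and> y \<notin> A"
proof -
  obtain U V where "open U" "open V" "x \<in> U" "y \<in> V" "U \<inter> V = {}"
    using hausdorff[OF assms] by blast
  then obtain W where "clopen_set W" "x \<in> W" "W \<subseteq> U" using clopen_nbhd by blast
  then show ?thesis using \<open>y \<in> V\<close> \<open>U \<inter> V = {}\<close> by blast
qed

lemma subgroup: "homeo_subgroup G"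
  using sgp unfolding space_group_pair_def by (elim conjE)

lemma G_c: "G \<subseteq> Homeo_c"
  using sgp unfolding space_group_pair_def by (elim conjE)

lemma id_G: "id \<in> G"
  using subgroup unfolding homeo_subgroup_def by blast

lemma comp_G: "f \<in> G \<Longrightarrow> g \<in> G \<Longrightarrow> f \<circ> g \<in> G"
  using subgroup unfolding homeo_subgroup_def by blast

lemma inv_G: "f \<in> G \<Longrightarrow> inv f \<in> G"
  using subgroup unfolding homeo_subgroup_def by blast

lemma homeo: "f \<in> G \<Longrightarrow> homeomorphism UNIV UNIV f (inv f)"
  using subgroup unfolding homeo_subgroup_def Homeo_def by blast

lemma cont: "f \<in> G \<Longrightarrow> continuous_on UNIV f"
  using homeo homeomorphism_cont1 by blast

lemma bijG: "f \<in> G \<Longrightarrow> bij f"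
proof -
  assume "f \<in> G"
  then have h: "homeomorphism UNIV UNIV f (inv f)" by (rule homeo)
  have "inv f (f x) = x" for x using homeomorphism_apply1[OF h] by simp
  moreover have "f (inv f x) = x" for x using homeomorphism_apply2[OF h] by simp
  ultimately show "bij f" by (metis bijI' )
qed

lemma injG: "f \<in> G \<Longrightarrow> inj f"
  using bijG bij_is_inj by blast

lemma invr: "f \<in> G \<Longrightarrow> f (inv f x) = x"
  using bijG bij_is_surj surj_f_inv_f by metis

lemma invl: "f \<in> G \<Longrightarrow> inv f (f x) = x"
  using injG inv_f_f by metis

lemma supp_open: "f \<in> G \<Longrightarrow> open (supp f)"
  using G_c unfolding Homeo_c_def by blast

lemma supp_compact: "f \<in> G \<Longrightarrow> compact (supp f)"
  using G_c unfolding Homeo_c_def by blast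

lemma supp_closed: "closed (supp f)"
  unfolding supp_def by simp

lemma supp_clopen: "f \<in> G \<Longrightarrow> clopen_set (supp f)"
  unfolding clopen_set_def using supp_open supp_closed by blast

lemma mov_open:
  assumes "f \<in> G" shows "open (mov f)"
  unfolding open_subopen[of "mov f"]
proof
  fix x assume "x \<in> mov f"
  then have "f x \<noteq> x" unfolding mov_def by simp
  then obtain U V where UV: "open U" "open V" "f x \<in> U" "x \<in> V" "U \<inter> V = {}"
    using hausdorff[OF \<open>f x \<noteq> x\<close>] by meson
  have o: "open (f -` U \<inter> UNIV)"
    using cont[OF assms] UV(1) continuous_on_open_vimage[of UNIV f] by blast
  show "\<exists>T. open T \<and> x \<in> T \<and> T \<subseteq> mov f"
    apply (rule exI[of _ "V \<inter> (f -` U \<inter> UNIV)"])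
    using o UV unfolding mov_def by auto
qed

lemma shrink:
  assumes "open N" "y \<in> N" "f \<in> G" "f y \<noteq> y"
  shows "\<exists>N'. open N' \<and> y \<in> N' \<and> N' \<subseteq> N \<and> (\<forall>z\<in>N'. f z \<notin> N')"
proof -
  obtain U V where UV: "open U" "open V" "y \<in> U" "f y \<in> V" "U \<inter> V = {}"
    using hausdorff[OF assms(4)[symmetric]] by meson
  have o: "open (f -` V \<inter> UNIV)"
    using cont[OF assms(3)] UV(2) continuous_on_open_vimage[of UNIV f] by blast
  show ?thesis
    apply (rule exI[of _ "N \<inter> U \<inter> (f -` V \<inter> UNIV)"])
    using o UV assms(1,2) by auto
qed

lemma KF1: "\<forall>x A. clopen_set A \<and> x \<in> A \<longrightarrow>
       (\<exists>\<alpha>\<in>G. \<alpha> \<noteq> id \<and> \<alpha> \<circ> \<alpha> = id \<and> x \<in> supp \<alpha> \<and> supp \<alpha> \<subseteq> A)"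
  using KF unfolding class_KF_def by (elim conjE)

lemma KF2: "\<forall>\<alpha>\<in>G. \<forall>A. \<alpha> \<noteq> id \<and> \<alpha> \<circ> \<alpha> = id \<and> clopen_set A \<and> A \<noteq> {} \<and> A \<subseteq> supp \<alpha> \<longrightarrow>
       (\<exists>\<beta>\<in>G. \<beta> \<noteq> id \<and> supp \<beta> \<subseteq> A \<union> \<alpha> ` A \<and> (\<forall>x\<in>supp \<beta>. \<alpha> x = \<beta> x))"
  using KF unfolding class_KF_def by (elim conjE)

lemma KF3: "\<forall>A. clopen_set A \<and> A \<noteq> {} \<longrightarrow> (\<exists>\<alpha>\<in>G. supp \<alpha> \<subseteq> A \<and> \<alpha> \<circ> \<alpha> \<noteq> id)"
  using KF unfolding class_KF_def by (elim conjE)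

lemma F1: "clopen_set A \<Longrightarrow> x \<in> A \<Longrightarrow>
   \<exists>a\<in>G. a \<noteq> id \<and> a \<circ> a = id \<and> x \<in> supp a \<and> supp a \<subseteq> A"
  using KF1 by blast

lemma F2: "a \<in> G \<Longrightarrow> a \<noteq> id \<Longrightarrow> a \<circ> a = id \<Longrightarrow> clopen_set A \<Longrightarrow> A \<noteq> {} \<Longrightarrow> A \<subseteq> supp a \<Longrightarrow>
   \<exists>b\<in>G. b \<noteq> id \<and> supp b \<subseteq> A \<union> a ` A \<and> (\<forall>x\<in>supp b. a x = b x)"
  using KF2 by blast

lemma F3: "clopen_set A \<Longrightarrow> A \<noteq> {} \<Longrightarrow> \<exists>a\<in>G. supp a \<subseteq> A \<and> a \<circ> a \<noteq> id"
  using KF3 by blast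

lemma supp_meets_mov:
  assumes "y \<in> supp f" "open Ob" "y \<in> Ob"
  shows "\<exists>y'\<in>Ob. f y' \<noteq> y'"
  using assms closure_nhds[of y "mov f"] unfolding supp_def mov_def by blast

lemma invol_app: "a \<circ> a = id \<Longrightarrow> a (a x) = x"
  by (metis comp_apply id_apply)

lemma mov_image: "inj f \<Longrightarrow> f x \<noteq> x \<Longrightarrow> f (f x) \<noteq> f x"
  by (simp add: inj_eq)

end


context KF
begin

lemma mov_sub_supp: "x \<in> mov f \<Longrightarrow> x \<in> supp f"
  using mov_supp by blast

lemma restr_from_F2:
  assumes "a \<in> G" "a \<circ> a = id" "b \<in> G" "\<forall>x\<in>supp b. a x = b x"
  shows "restr b a"
proof -
  have bb: "b (b x) = x" for x
  proof (cases "b x = x")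
    case True then show ?thesis by simp
  next
    case False
    have "x \<in> supp b" using False mov_sub_supp unfolding mov_def by blast
    then have 1: "b x = a x" using assms(4) by simp
    have "b (b x) \<noteq> b x" using mov_image[OF injG[OF assms(3)] False] .
    then have "b x \<in> supp b" using mov_sub_supp unfolding mov_def by blast
    then have "b (b x) = a (b x)" using assms(4) by simp
    also have "\<dots> = x" using 1 invol_app[OF assms(2)] by simp
    finally show ?thesis .
  qed
  have "b \<circ> b = id" using bb by (simp add: fun_eq_iff)
  moreover have "\<forall>y. b y \<noteq> y \<longrightarrow> b y = a y"
  proof (intro allI impI)
    fix y assume "b y \<noteq> y"
    then have "y \<in> supp b" using mov_sub_supp unfolding mov_def by blast
    then show "b y = a y" using assms(4) by simp
  qed
  ultimately show ?thesis unfolding restr_def by simp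
qed

lemma Le_of_restr:
  assumes "a \<in> G" "a \<circ> a = id" "b \<in> G" "restr b a"
  shows "LeR G b a"
  unfolding LeR_def
proof (intro conjI ballI impI)
  show "b \<circ> b = id" using assms(4) unfolding restr_def by simp
  fix h assume h: "h \<in> G" "commutes h a"
  have bb: "b (b z) = z" for z using \<open>b \<circ> b = id\<close> invol_app by metis
  have ha: "h (a z) = a (h z)" for z using h(2) unfolding commutes_def by (metis comp_apply)
  have r: "b z \<noteq> z \<Longrightarrow> b z = a z" for z using assms(4) unfolding restr_def by blast
  have "restr (h \<circ> b \<circ> inv h) a"
    unfolding restr_def
  proof (intro conjI allI impI)
    show "(h \<circ> b \<circ> inv h) \<circ> (h \<circ> b \<circ> inv h) = id"
      by (simp add: fun_eq_iff invl[OF h(1)] invr[OF h(1)] bb)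
    fix y assume ne: "(h \<circ> b \<circ> inv h) y \<noteq> y"
    define z where "z = inv h y"
    have hz: "h z = y" unfolding z_def using invr[OF h(1)] by simp
    have "b z \<noteq> z" using ne hz unfolding z_def by auto
    then have "b z = a z" using r by simp
    then show "(h \<circ> b \<circ> inv h) y = a y" using hz ha unfolding z_def by simp
  qed
  then show "commutes (h \<circ> b \<circ> inv h) b"
    using restr_commute[OF _ assms(4) assms(2)] by simp
qed

lemma restr_of_Le:
  assumes aG: "a \<in> G" and aa: "a \<circ> a = id" and bG: "b \<in> G" and le: "LeR G b a"
  shows "restr b a"
proof (rule ccontr)
  assume nr: "\<not> restr b a"
  have bb2: "b \<circ> b = id" using le unfolding LeR_def by simp
  have bb: "b (b z) = z" for z using invol_app[OF bb2] .
  have aa': "a (a z) = z" for z using invol_app[OF aa] .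
  obtain y where y: "b y \<noteq> y" "b y \<noteq> a y" using nr bb2 unfolding restr_def by blast
  have key: "\<And>h. h \<in> G \<Longrightarrow> commutes h a \<Longrightarrow> commutes (h \<circ> b \<circ> inv h) b"
    using le unfolding LeR_def by blast
  show False
  proof (cases "y \<in> supp a")
    case False
    have "open (- supp a)" by (rule open_Compl[OF supp_closed])
    then obtain N' where N': "open N'" "y \<in> N'" "N' \<subseteq> - supp a" "\<forall>z\<in>N'. b z \<notin> N'"
      using shrink[of "- supp a" y b] False bG y(1) by blast
    then obtain W where W: "clopen_set W" "y \<in> W" "W \<subseteq> N'" using clopen_nbhd by meson
    then obtain g where g: "g \<in> G" "supp g \<subseteq> W" "g \<circ> g \<noteq> id" using F3[of W] by blast
    obtain w' where w': "g (g w') \<noteq> w'" using g(3) by (auto simp: fun_eq_iff)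
    define w where "w = g w'"
    have gw': "g w' \<noteq> w'" using w' by auto
    have gw: "g w \<noteq> w" unfolding w_def using mov_image[OF injG[OF g(1)] gw'] .
    have w'W: "w' \<in> W" using gw' mov_sub_supp g(2) unfolding mov_def by blast
    have wW: "w \<in> W" using gw mov_sub_supp g(2) unfolding mov_def by blast
    have gfix: "z \<notin> W \<Longrightarrow> g z = z" for z using not_supp_fix g(2) by blast
    have "commutes g a"
    proof (rule disj_mov_commute[OF injG[OF g(1)] injG[OF aG]])
      show "mov g \<inter> mov a = {}"
        using mov_supp[of g] mov_supp[of a] g(2) W(3) N'(3) by blast
    qed
    then have c: "commutes (g \<circ> b \<circ> inv g) b" using key g(1) by blast
    have "\<not> commutes (g \<circ> b \<circ> inv g) b"
    proof (rule noncommute_lemma[OF injG[OF g(1)] bb2])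
      show "g w' = w" unfolding w_def ..
      show "g (b w) = b w" using gfix N'(4) W(3) wW by blast
      show "g (b w') = b w'" using gfix N'(4) W(3) w'W by blast
      show "g w \<noteq> w'" using w' unfolding w_def .
    qed
    then show False using c by simp
  next
    case True
    define N0 where "N0 = mov b \<inter> mov (a \<circ> b) \<inter> supp a"
    have abG: "a \<circ> b \<in> G" using comp_G aG bG by blast
    have oN0: "open N0" unfolding N0_def
      using mov_open[OF bG] mov_open[OF abG] supp_open[OF aG] by blast
    have "a (b y) \<noteq> y"
    proof
      assume "a (b y) = y"
      then have "a (a (b y)) = a y" by simp
      then show False using aa' y(2) by simp
    qed
    then have "y \<in> N0" unfolding N0_def mov_def using y(1) True by simp
    then obtain y' where y': "y' \<in> N0" "a y' \<noteq> y'"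
      using supp_meets_mov[OF True oN0] by blast
    have by': "b y' \<noteq> y'" and aby': "a (b y') \<noteq> y'"
      using y'(1) unfolding N0_def mov_def by auto
    obtain N1 where N1: "open N1" "y' \<in> N1" "\<forall>z\<in>N1. a z \<notin> N1"
      using shrink[of UNIV y' a] aG y'(2) by blast
    obtain N2 where N2: "open N2" "y' \<in> N2" "N2 \<subseteq> N1" "\<forall>z\<in>N2. b z \<notin> N2"
      using shrink[OF N1(1,2) bG by'] by blast
    obtain N3 where N3: "open N3" "y' \<in> N3" "N3 \<subseteq> N2" "\<forall>z\<in>N3. (a \<circ> b) z \<notin> N3"
      using shrink[OF N2(1,2) abG] aby' by auto
    obtain W where W: "clopen_set W" "y' \<in> W" "W \<subseteq> N3" using clopen_nbhd[OF N3(1,2)] by meson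
    have Wa: "z \<in> W \<Longrightarrow> a z \<notin> W" for z using N1(3) N2(3) N3(3) W(3) by blast
    have Wb: "z \<in> W \<Longrightarrow> b z \<notin> W" for z using N2(4) N3(3) W(3) by blast
    have Wab: "z \<in> W \<Longrightarrow> a (b z) \<notin> W" for z using N3(4) W(3) by fastforce
    obtain g where g: "g \<in> G" "supp g \<subseteq> W" "g \<circ> g \<noteq> id" using F3[of W] W by blast
    obtain w' where w': "g (g w') \<noteq> w'" using g(3) by (auto simp: fun_eq_iff)
    define w where "w = g w'"
    have gw': "g w' \<noteq> w'" using w' by auto
    have gw: "g w \<noteq> w" unfolding w_def using mov_image[OF injG[OF g(1)] gw'] .
    have w'W: "w' \<in> W" using gw' mov_sub_supp g(2) unfolding mov_def by blast
    have wW: "w \<in> W" using gw mov_sub_supp g(2) unfolding mov_def by blast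
    have gfix: "z \<notin> W \<Longrightarrow> g z = z" for z using not_supp_fix g(2) by blast
    define h where "h = g \<circ> (a \<circ> g \<circ> a)"
    have agaG: "a \<circ> g \<circ> a \<in> G" using comp_G aG g(1) by blast
    have hG: "h \<in> G" unfolding h_def using comp_G g(1) agaG by blast
    have hW: "z \<in> W \<Longrightarrow> h z = g z" for z unfolding h_def using gfix Wa aa' by simp
    have cg: "commutes g (a \<circ> g \<circ> a)"
    proof (rule disj_mov_commute[OF injG[OF g(1)] injG[OF agaG]])
      show "mov g \<inter> mov (a \<circ> g \<circ> a) = {}"
      proof (rule ccontr)
        assume "mov g \<inter> mov (a \<circ> g \<circ> a) \<noteq> {}"
        then obtain z where z: "g z \<noteq> z" "a (g (a z)) \<noteq> z" unfolding mov_def by auto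
        have "z \<in> W" using z(1) mov_sub_supp g(2) unfolding mov_def by blast
        then have "g (a z) = a z" using gfix Wa by blast
        then show False using z(2) aa' by simp
      qed
    qed
    have cg': "g (a (g (a z))) = a (g (a (g z)))" for z
      using fun_cong[OF cg[unfolded commutes_def], of z] by simp
    have "commutes h a"
      unfolding commutes_def h_def
    proof
      fix x
      show "((g \<circ> (a \<circ> g \<circ> a)) \<circ> a) x = (a \<circ> (g \<circ> (a \<circ> g \<circ> a))) x"
        using cg'[of "a x"] aa' by simp
    qed
    then have c: "commutes (h \<circ> b \<circ> inv h) b" using key hG by blast
    have hfix: "z \<in> W \<Longrightarrow> h (b z) = b z" for z
    proof -
      assume zW: "z \<in> W"
      have "g (a (b z)) = a (b z)" using gfix Wab zW by blast
      then have "a (g (a (b z))) = b z" using aa' by simp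
      moreover have "g (b z) = b z" using gfix Wb zW by blast
      ultimately show "h (b z) = b z" unfolding h_def by simp
    qed
    have "\<not> commutes (h \<circ> b \<circ> inv h) b"
    proof (rule noncommute_lemma[OF injG[OF hG] bb2])
      show "h w' = w" unfolding w_def using hW w'W by simp
      show "h (b w) = b w" using hfix wW by simp
      show "h (b w') = b w'" using hfix w'W by simp
      show "h w \<noteq> w'" using hW wW w' unfolding w_def by simp
    qed
    then show False using c by simp
  qed
qed

lemma Le_iff: "a \<in> G \<Longrightarrow> a \<circ> a = id \<Longrightarrow> b \<in> G \<Longrightarrow> LeR G b a \<longleftrightarrow> restr b a"
  using Le_of_restr restr_of_Le by blast

end


context KF
begin

lemma restr_mov: "restr b a \<Longrightarrow> b y \<noteq> y \<Longrightarrow> a y \<noteq> y"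
  unfolding restr_def by metis

lemma Disj_of_disjoint:
  assumes aG: "a \<in> G" and aa: "a \<circ> a = id" and cG: "c \<in> G" and cc: "c \<circ> c = id"
    and dis: "supp a \<inter> supp c = {}"
  shows "DisjR G a c"
  unfolding DisjR_def
proof (intro conjI ballI impI)
  fix b assume bG: "b \<in> G" and le: "LeR G b a"
  have r: "restr b a" using Le_iff[OF aG aa bG] le by simp
  have "mov b \<subseteq> supp a" using restr_mov[OF r] mov_supp[of a] unfolding mov_def by blast
  then have "mov b \<inter> mov c = {}" using dis mov_supp[of c] by blast
  then show "commutes b c" using disj_mov_commute injG bG cG by blast
next
  fix b assume bG: "b \<in> G" and le: "LeR G b a \<and> LeR G b c"
  have r: "restr b a" using Le_iff[OF aG aa bG] le by simp
  have r2: "restr b c" using Le_iff[OF cG cc bG] le by simp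
  show "b = id"
  proof
    fix x
    show "b x = id x"
    proof (rule ccontr)
      assume "b x \<noteq> id x"
      then have "b x \<noteq> x" by simp
      then have "x \<in> supp a" "x \<in> supp c"
        using restr_mov[OF r] restr_mov[OF r2] mov_sub_supp unfolding mov_def by blast+
      then show False using dis by blast
    qed
  qed
qed

lemma disjoint_of_Disj:
  assumes aG: "a \<in> G" and aa: "a \<circ> a = id" and cG: "c \<in> G" and cc: "c \<circ> c = id"
    and D: "DisjR G a c"
  shows "supp a \<inter> supp c = {}"
proof (rule ccontr)
  assume "supp a \<inter> supp c \<noteq> {}"
  then obtain z where z: "z \<in> supp a" "z \<in> supp c" by blast
  have aa': "a (a u) = u" for u using invol_app[OF aa] .
  have cc': "c (c u) = u" for u using invol_app[OF cc] .
  obtain y1 where y1: "y1 \<in> supp c" "a y1 \<noteq> y1"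
    using supp_meets_mov[OF z(1) supp_open[OF cG] z(2)] by blast
  have y1a: "y1 \<in> mov a" using y1 unfolding mov_def by simp
  obtain y0 where y0: "y0 \<in> mov a" "c y0 \<noteq> y0"
    using supp_meets_mov[OF y1(1) mov_open[OF aG] y1a] by blast
  have D1: "\<And>b. b \<in> G \<Longrightarrow> LeR G b a \<Longrightarrow> commutes b c" using D unfolding DisjR_def by blast
  have D2: "\<And>b. b \<in> G \<Longrightarrow> LeR G b a \<Longrightarrow> LeR G b c \<Longrightarrow> b = id" using D unfolding DisjR_def by blast
  have aid: "a \<noteq> id" using y0(1) unfolding mov_def by auto
  show False
  proof (cases "\<exists>y. a y \<noteq> y \<and> c y \<noteq> y \<and> c y \<noteq> a y")
    case True
    then obtain y where y: "a y \<noteq> y" "c y \<noteq> y" "c y \<noteq> a y" by blast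
    have acG: "a \<circ> c \<in> G" using comp_G aG cG by blast
    have acy: "(a \<circ> c) y \<noteq> y"
    proof
      assume "(a \<circ> c) y = y"
      then have "a (a (c y)) = a y" by simp
      then show False using aa' y(3) by simp
    qed
    have ya: "y \<in> mov a" using y(1) unfolding mov_def by simp
    obtain N1 where N1: "open N1" "y \<in> N1" "N1 \<subseteq> mov a" "\<forall>z\<in>N1. c z \<notin> N1"
      using shrink[OF mov_open[OF aG] ya cG y(2)] by blast
    obtain N2 where N2: "open N2" "y \<in> N2" "N2 \<subseteq> N1" "\<forall>z\<in>N2. (a \<circ> c) z \<notin> N2"
      using shrink[OF N1(1,2) acG acy] by blast
    obtain W where W: "clopen_set W" "y \<in> W" "W \<subseteq> N2" using clopen_nbhd[OF N2(1,2)] by meson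
    have Wc: "u \<in> W \<Longrightarrow> c u \<notin> W" for u using N1(4) N2(3) W(3) by blast
    have Wac: "u \<in> W \<Longrightarrow> a (c u) \<notin> W" for u using N2(4) W(3) by fastforce
    have Wsupp: "W \<subseteq> supp a" using W(3) N2(3) N1(3) mov_supp[of a] by blast
    obtain b where b: "b \<in> G" "b \<noteq> id" "supp b \<subseteq> W \<union> a ` W" "\<forall>x\<in>supp b. a x = b x"
      using F2[OF aG aid aa W(1) _ Wsupp] W(2) by blast
    have r: "restr b a" using restr_from_F2[OF aG aa b(1) b(4)] .
    have bb: "b (b u) = u" for u using r invol_app unfolding restr_def by metis
    have cbc: "commutes b c" using D1[OF b(1)] Le_of_restr[OF aG aa b(1) r] by blast
    obtain z where zb: "b z \<noteq> z" using b(2) by (auto simp: fun_eq_iff)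
    have zs: "z \<in> supp b" using zb mov_sub_supp unfolding mov_def by blast
    obtain z0 where z0: "z0 \<in> W" "b z0 \<noteq> z0"
    proof (cases "z \<in> W")
      case True then show ?thesis using that zb by blast
    next
      case False
      then obtain w where w: "w \<in> W" "z = a w" using zs b(3) by blast
      have "b z = w" using b(4) zs w(2) aa' by metis
      then have "b w = z" using bb by metis
      then have "b w \<noteq> w" using zb \<open>b z = w\<close> by metis
      then show ?thesis using that w(1) by blast
    qed
    have bcz: "b (c z0) = c z0"
    proof (rule ccontr)
      assume "b (c z0) \<noteq> c z0"
      then have "c z0 \<in> supp b" using mov_sub_supp unfolding mov_def by blast
      then have "c z0 \<in> W \<union> a ` W" using b(3) by blast
      moreover have "c z0 \<notin> W" using Wc z0(1) by blast
      ultimately obtain w where w: "w \<in> W" "c z0 = a w" by blast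
      then have "a (c z0) = w" using aa' by simp
      then show False using Wac[OF z0(1)] w(1) by simp
    qed
    have "(b \<circ> c) (c z0) = (c \<circ> b) (c z0)" using cbc unfolding commutes_def by simp
    then have "b z0 = z0" using bcz cc' by simp
    then show False using z0(2) by simp
  next
    case False
    then have eq: "\<And>u. a u \<noteq> u \<Longrightarrow> c u \<noteq> u \<Longrightarrow> c u = a u" by blast
    define N where "N = mov a \<inter> mov c"
    have oN: "open N" unfolding N_def using mov_open[OF aG] mov_open[OF cG] by blast
    have y0N: "y0 \<in> N" unfolding N_def using y0 unfolding mov_def by simp
    obtain W where W: "clopen_set W" "y0 \<in> W" "W \<subseteq> N" using clopen_nbhd[OF oN y0N] by meson
    have Wsupp: "W \<subseteq> supp a" using W(3) mov_supp[of a] unfolding N_def by blast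
    obtain b where b: "b \<in> G" "b \<noteq> id" "supp b \<subseteq> W \<union> a ` W" "\<forall>x\<in>supp b. a x = b x"
      using F2[OF aG aid aa W(1) _ Wsupp] W(2) by blast
    have r: "restr b a" using restr_from_F2[OF aG aa b(1) b(4)] .
    have rc: "restr b c"
      unfolding restr_def
    proof (intro conjI allI impI)
      show "b \<circ> b = id" using r unfolding restr_def by simp
      fix x assume bx: "b x \<noteq> x"
      then have xs: "x \<in> supp b" using mov_sub_supp unfolding mov_def by blast
      then have bxa: "b x = a x" using b(4) by simp
      show "b x = c x"
      proof (cases "x \<in> W")
        case True
        then have "a x \<noteq> x" "c x \<noteq> x" using W(3) unfolding N_def mov_def by auto
        then show ?thesis using eq[of x] bxa by simp
      next
        case False
        then obtain w where w: "w \<in> W" "x = a w" using xs b(3) by blast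
        then have "a w \<noteq> w" "c w \<noteq> w" using W(3) unfolding N_def mov_def by auto
        then have "c w = a w" using eq by simp
        then have "c x = w" using w(2) cc' by metis
        then show ?thesis using bxa w(2) aa' by simp
      qed
    qed
    have "b = id"
      using D2[OF b(1) Le_of_restr[OF aG aa b(1) r] Le_of_restr[OF cG cc b(1) rc]] .
    then show False using b(2) by simp
  qed
qed

lemma Disj_iff: "a \<in> G \<Longrightarrow> a \<circ> a = id \<Longrightarrow> c \<in> G \<Longrightarrow> c \<circ> c = id \<Longrightarrow>
   DisjR G a c \<longleftrightarrow> supp a \<inter> supp c = {}"
  using Disj_of_disjoint disjoint_of_Disj by blast

end


context KF
begin

lemma supp_conj:
  assumes gG: "g \<in> G"
  shows "x \<in> supp (inv g \<circ> a \<circ> g) \<longleftrightarrow> g x \<in> supp a"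
proof -
  have mv: "{x. (inv g \<circ> a \<circ> g) x \<noteq> x} = g -` {x. a x \<noteq> x}"
  proof (rule set_eqI)
    fix z
    have "inv g (a (g z)) = z \<longleftrightarrow> a (g z) = g z"
      by (metis invl[OF gG] invr[OF gG])
    then show "z \<in> {x. (inv g \<circ> a \<circ> g) x \<noteq> x} \<longleftrightarrow> z \<in> g -` {x. a x \<noteq> x}" by simp
  qed
  define M where "M = {x. a x \<noteq> x}"
  have igG: "inv g \<in> G" using inv_G[OF gG] .
  have "x \<in> closure (g -` M) \<longleftrightarrow> g x \<in> closure M"
  proof
    assume xc: "x \<in> closure (g -` M)"
    show "g x \<in> closure M"
      unfolding closure_nhds
    proof (intro allI impI)
      fix U assume U: "open U" "g x \<in> U"
      have "open (g -` U \<inter> UNIV)"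
        using cont[OF gG] U(1) continuous_on_open_vimage[of UNIV g] by blast
      then have "(g -` U) \<inter> (g -` M) \<noteq> {}" using xc U(2) unfolding closure_nhds by simp
      then show "U \<inter> M \<noteq> {}" by blast
    qed
  next
    assume gc: "g x \<in> closure M"
    show "x \<in> closure (g -` M)"
      unfolding closure_nhds
    proof (intro allI impI)
      fix U assume U: "open U" "x \<in> U"
      have o: "open (inv g -` U \<inter> UNIV)"
        using cont[OF igG] U(1) continuous_on_open_vimage[of UNIV "inv g"] by blast
      have "g x \<in> inv g -` U" using U(2) invl[OF gG] by simp
      then have "(inv g -` U) \<inter> M \<noteq> {}" using gc o unfolding closure_nhds by simp
      then obtain m where m: "inv g m \<in> U" "m \<in> M" by blast
      then have "inv g m \<in> g -` M" using invr[OF gG] by simp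
      then show "U \<inter> g -` M \<noteq> {}" using m(1) by blast
    qed
  qed
  then show ?thesis unfolding supp_def mv M_def .
qed

lemma clopen_UNIV: "clopen_set UNIV"
  unfolding clopen_set_def by simp

lemma clopen_Compl_supp: "f \<in> G \<Longrightarrow> clopen_set (- supp f)"
  unfolding clopen_set_def using open_Compl[OF supp_closed] closed_Compl[OF supp_open] by blast

lemma supp_nonempty: "f \<noteq> id \<Longrightarrow> supp f \<noteq> {}"
proof -
  assume "f \<noteq> id"
  then obtain z where "f z \<noteq> z" by (auto simp: fun_eq_iff)
  then have "z \<in> supp f" using mov_sub_supp unfolding mov_def by blast
  then show ?thesis by blast
qed

end

locale KFiso = G1: KF G1 + G2: KF G2
  for G1 :: "('a::topological_space \<Rightarrow> 'a) set"
  and G2 :: "('b::topological_space \<Rightarrow> 'b) set" +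
  fixes Phi :: "('a \<Rightarrow> 'a) \<Rightarrow> ('b \<Rightarrow> 'b)"
  assumes iso: "group_iso Phi G1 G2"
begin

lemma bijP: "bij_betw Phi G1 G2" using iso unfolding group_iso_def by (elim conjE)

lemma PhiG: "f \<in> G1 \<Longrightarrow> Phi f \<in> G2" using bijP by (rule bij_betw_apply)

lemma Phi_comp: "f \<in> G1 \<Longrightarrow> g \<in> G1 \<Longrightarrow> Phi (f \<circ> g) = Phi f \<circ> Phi g"
  using iso unfolding group_iso_def by simp

lemma Phi_inj: "f \<in> G1 \<Longrightarrow> g \<in> G1 \<Longrightarrow> Phi f = Phi g \<longleftrightarrow> f = g"
  using bijP unfolding bij_betw_def inj_on_def by metis

lemma Phi_surj: "h \<in> G2 \<Longrightarrow> \<exists>f\<in>G1. h = Phi f"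
  using bijP unfolding bij_betw_def by auto

lemma Phi_id: "Phi id = id"
proof -
  define p where "p = Phi id"
  have pG: "p \<in> G2" unfolding p_def using PhiG[OF G1.id_G] .
  have "p = p \<circ> p" unfolding p_def using Phi_comp[OF G1.id_G G1.id_G] by simp
  then have "p (p x) = p x" for x by (metis comp_apply)
  then have "p x = x" for x using G2.injG[OF pG] by (meson injD)
  then show ?thesis unfolding p_def by (simp add: fun_eq_iff)
qed

lemma Phi_inv: "f \<in> G1 \<Longrightarrow> Phi (inv f) = inv (Phi f)"
proof -
  assume fG: "f \<in> G1"
  have "f \<circ> inv f = id" using G1.invr[OF fG] by (simp add: fun_eq_iff)
  then have "Phi f \<circ> Phi (inv f) = id" using Phi_comp[OF fG G1.inv_G[OF fG]] Phi_id by simp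
  then have e: "Phi f (Phi (inv f) x) = x" for x by (metis comp_apply id_apply)
  show ?thesis
  proof
    fix x
    have "inv (Phi f) (Phi f (Phi (inv f) x)) = Phi (inv f) x" using G2.invl[OF PhiG[OF fG]] .
    then show "Phi (inv f) x = inv (Phi f) x" using e by simp
  qed
qed

lemma comm_iff: "f \<in> G1 \<Longrightarrow> g \<in> G1 \<Longrightarrow> commutes f g \<longleftrightarrow> commutes (Phi f) (Phi g)"
  unfolding commutes_def using Phi_inj[of "f \<circ> g" "g \<circ> f"] Phi_comp G1.comp_G by metis

lemma invol_iff: "f \<in> G1 \<Longrightarrow> f \<circ> f = id \<longleftrightarrow> Phi f \<circ> Phi f = id"
  using Phi_inj[of "f \<circ> f" id] Phi_comp Phi_id G1.comp_G G1.id_G by metis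

lemma id_iff: "f \<in> G1 \<Longrightarrow> f = id \<longleftrightarrow> Phi f = id"
  using Phi_inj[of f id] Phi_id G1.id_G by metis

lemma ball_G2: "(\<forall>h\<in>G2. P h) \<longleftrightarrow> (\<forall>f\<in>G1. P (Phi f))"
  using PhiG Phi_surj by metis

lemma conj_Phi: "h \<in> G1 \<Longrightarrow> b \<in> G1 \<Longrightarrow> Phi (h \<circ> b \<circ> inv h) = Phi h \<circ> Phi b \<circ> inv (Phi h)"
  using Phi_comp Phi_inv G1.comp_G G1.inv_G by metis

lemma Le_transfer:
  assumes "b \<in> G1" "a \<in> G1"
  shows "LeR G1 b a \<longleftrightarrow> LeR G2 (Phi b) (Phi a)"
proof -
  have "(\<forall>h\<in>G2. commutes h (Phi a) \<longrightarrow> commutes (h \<circ> Phi b \<circ> inv h) (Phi b)) \<longleftrightarrow>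
        (\<forall>f\<in>G1. commutes (Phi f) (Phi a) \<longrightarrow> commutes (Phi f \<circ> Phi b \<circ> inv (Phi f)) (Phi b))"
    by (rule ball_G2)
  also have "\<dots> \<longleftrightarrow> (\<forall>f\<in>G1. commutes f a \<longrightarrow> commutes (f \<circ> b \<circ> inv f) b)"
  proof (intro ball_cong refl)
    fix f assume fG: "f \<in> G1"
    have "commutes (f \<circ> b \<circ> inv f) b \<longleftrightarrow> commutes (Phi (f \<circ> b \<circ> inv f)) (Phi b)"
      using comm_iff G1.comp_G G1.inv_G fG assms(1) by metis
    then show "(commutes (Phi f) (Phi a) \<longrightarrow> commutes (Phi f \<circ> Phi b \<circ> inv (Phi f)) (Phi b)) =
               (commutes f a \<longrightarrow> commutes (f \<circ> b \<circ> inv f) b)"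
      using comm_iff[OF fG assms(2)] conj_Phi[OF fG assms(1)] by simp
  qed
  finally show ?thesis unfolding LeR_def using invol_iff[OF assms(1)] by simp
qed

lemma Disj_transfer:
  assumes "a \<in> G1" "c \<in> G1"
  shows "DisjR G1 a c \<longleftrightarrow> DisjR G2 (Phi a) (Phi c)"
proof -
  have 1: "(\<forall>h\<in>G2. LeR G2 h (Phi a) \<longrightarrow> commutes h (Phi c)) \<longleftrightarrow>
        (\<forall>f\<in>G1. LeR G2 (Phi f) (Phi a) \<longrightarrow> commutes (Phi f) (Phi c))"
    by (rule ball_G2)
  have 2: "(\<forall>h\<in>G2. LeR G2 h (Phi a) \<and> LeR G2 h (Phi c) \<longrightarrow> h = id) \<longleftrightarrow>
        (\<forall>f\<in>G1. LeR G2 (Phi f) (Phi a) \<and> LeR G2 (Phi f) (Phi c) \<longrightarrow> Phi f = id)"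
    by (rule ball_G2)
  have 3: "(\<forall>f\<in>G1. LeR G2 (Phi f) (Phi a) \<longrightarrow> commutes (Phi f) (Phi c)) \<longleftrightarrow>
           (\<forall>f\<in>G1. LeR G1 f a \<longrightarrow> commutes f c)"
    using Le_transfer[OF _ assms(1)] comm_iff[OF _ assms(2)] by (simp cong: ball_cong)
  have 4: "(\<forall>f\<in>G1. LeR G2 (Phi f) (Phi a) \<and> LeR G2 (Phi f) (Phi c) \<longrightarrow> Phi f = id) \<longleftrightarrow>
           (\<forall>f\<in>G1. LeR G1 f a \<and> LeR G1 f c \<longrightarrow> f = id)"
    using Le_transfer[OF _ assms(1)] Le_transfer[OF _ assms(2)] id_iff by (simp cong: ball_cong)
  show ?thesis unfolding DisjR_def using 1 2 3 4 by simp
qed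

lemma disjoint_transfer:
  assumes "a \<in> G1" "a \<circ> a = id" "c \<in> G1" "c \<circ> c = id"
  shows "supp a \<inter> supp c = {} \<longleftrightarrow> supp (Phi a) \<inter> supp (Phi c) = {}"
proof -
  have "supp a \<inter> supp c = {} \<longleftrightarrow> DisjR G1 a c" using G1.Disj_iff assms by simp
  also have "\<dots> \<longleftrightarrow> DisjR G2 (Phi a) (Phi c)" using Disj_transfer assms(1,3) .
  also have "\<dots> \<longleftrightarrow> supp (Phi a) \<inter> supp (Phi c) = {}"
    using G2.Disj_iff PhiG assms invol_iff by simp
  finally show ?thesis .
qed

end


context KFiso
begin

definition R :: "'a \<Rightarrow> 'b \<Rightarrow> bool" where
  "R x y \<longleftrightarrow> (\<forall>a\<in>G1. a \<circ> a = id \<longrightarrow> x \<in> supp a \<longrightarrow> y \<in> supp (Phi a))"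

lemma sub_transfer:
  assumes aG: "a \<in> G1" "a \<circ> a = id" and bG: "b \<in> G1" "b \<circ> b = id"
    and sub: "supp b \<subseteq> supp a"
  shows "supp (Phi b) \<subseteq> supp (Phi a)"
proof
  fix y assume yb: "y \<in> supp (Phi b)"
  show "y \<in> supp (Phi a)"
  proof (rule ccontr)
    assume ya: "y \<notin> supp (Phi a)"
    obtain d2 where d2: "d2 \<in> G2" "d2 \<circ> d2 = id" "y \<in> supp d2" "supp d2 \<subseteq> - supp (Phi a)"
      using G2.F1[OF G2.clopen_Compl_supp[OF PhiG[OF aG(1)]], of y] ya by blast
    obtain d where d: "d \<in> G1" "d2 = Phi d" using Phi_surj[OF d2(1)] by blast
    have dd: "d \<circ> d = id" using invol_iff[OF d(1)] d2(2) d(2) by simp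
    have "supp (Phi d) \<inter> supp (Phi a) = {}" using d2(4) d(2) by blast
    then have "supp d \<inter> supp a = {}" using disjoint_transfer[OF d(1) dd aG] by simp
    then have "supp d \<inter> supp b = {}" using sub by blast
    then have "supp (Phi d) \<inter> supp (Phi b) = {}" using disjoint_transfer[OF d(1) dd bG] by simp
    then show False using yb d2(3) d(2) by blast
  qed
qed

lemma K1: "\<exists>y. R x y"
proof -
  define S where "S = {a\<in>G1. a \<circ> a = id \<and> x \<in> supp a}"
  obtain a0 where a0: "a0 \<in> G1" "a0 \<circ> a0 = id" "x \<in> supp a0"
    using G1.F1[OF G1.clopen_UNIV, of x] by blast
  define Fam where "Fam = (\<lambda>a. supp (Phi a)) ` S"
  have "supp (Phi a0) \<inter> \<Inter>Fam \<noteq> {}"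
  proof (rule compact_imp_fip)
    show "compact (supp (Phi a0))" using G2.supp_compact[OF PhiG[OF a0(1)]] .
    show "\<And>T. T \<in> Fam \<Longrightarrow> closed T" unfolding Fam_def using G2.supp_closed by blast
    fix F' assume F': "finite F'" "F' \<subseteq> Fam"
    obtain S' where S': "S' \<subseteq> S" "finite S'" "F' = (\<lambda>a. supp (Phi a)) ` S'"
      using finite_subset_image[OF F'(1) F'(2)[unfolded Fam_def]] by blast
    define A where "A = supp a0 \<inter> \<Inter>(supp ` S')"
    have oA: "open A" unfolding A_def
      using S' G1.supp_open a0(1) unfolding S_def by (intro open_Int open_Inter) auto
    have cA: "closed A" unfolding A_def
      using G1.supp_closed by (intro closed_Int closed_Inter) auto
    have xA: "x \<in> A" unfolding A_def using a0(3) S'(1) unfolding S_def by blast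
    obtain b where b: "b \<in> G1" "b \<noteq> id" "b \<circ> b = id" "x \<in> supp b" "supp b \<subseteq> A"
      using G1.F1[of A x] oA cA xA unfolding clopen_set_def by blast
    have s0: "supp (Phi b) \<subseteq> supp (Phi a0)"
      using sub_transfer[OF a0(1,2) b(1,3)] b(5) unfolding A_def by blast
    have s1: "supp (Phi b) \<subseteq> \<Inter>F'"
    proof
      fix z assume z: "z \<in> supp (Phi b)"
      show "z \<in> \<Inter>F'"
      proof
        fix T assume "T \<in> F'"
        then obtain a where a: "a \<in> S'" "T = supp (Phi a)" using S'(3) by blast
        have aS: "a \<in> G1" "a \<circ> a = id" using a(1) S'(1) unfolding S_def by auto
        have "supp b \<subseteq> supp a" using b(5) a(1) unfolding A_def by blast
        then show "z \<in> T" using sub_transfer[OF aS b(1,3)] z a(2) by blast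
      qed
    qed
    have "Phi b \<noteq> id" using id_iff[OF b(1)] b(2) by simp
    then have "supp (Phi b) \<noteq> {}" using G2.supp_nonempty by blast
    then show "supp (Phi a0) \<inter> \<Inter>F' \<noteq> {}" using s0 s1 by blast
  qed
  then obtain y where y: "y \<in> \<Inter>Fam" by blast
  have "R x y" unfolding R_def
  proof (intro ballI impI)
    fix a assume "a \<in> G1" "a \<circ> a = id" "x \<in> supp a"
    then have "a \<in> S" unfolding S_def by blast
    then show "y \<in> supp (Phi a)" using y unfolding Fam_def by blast
  qed
  then show ?thesis by blast
qed

lemma K2:
  assumes "R x y" "a \<in> G1" "a \<circ> a = id" "y \<in> supp (Phi a)"
  shows "x \<in> supp a"
proof (rule ccontr)
  assume xa: "x \<notin> supp a"
  obtain d where d: "d \<in> G1" "d \<circ> d = id" "x \<in> supp d" "supp d \<subseteq> - supp a"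
    using G1.F1[OF G1.clopen_Compl_supp[OF assms(2)], of x] xa by blast
  have "supp d \<inter> supp a = {}" using d(4) by blast
  then have "supp (Phi d) \<inter> supp (Phi a) = {}" using disjoint_transfer[OF d(1,2) assms(2,3)] by simp
  moreover have "y \<in> supp (Phi d)" using assms(1) d unfolding R_def by blast
  ultimately show False using assms(4) by blast
qed

lemma R_iff: "R x y \<Longrightarrow> a \<in> G1 \<Longrightarrow> a \<circ> a = id \<Longrightarrow> y \<in> supp (Phi a) \<longleftrightarrow> x \<in> supp a"
  using K2 unfolding R_def by blast

lemma K3:
  assumes "R x y" "R x y'"
  shows "y = y'"
proof (rule ccontr)
  assume "y \<noteq> y'"
  then obtain A where A: "clopen_set A" "y \<in> A" "y' \<notin> A" using G2.sep_clopen by blast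
  obtain d2 where d2: "d2 \<in> G2" "d2 \<circ> d2 = id" "y \<in> supp d2" "supp d2 \<subseteq> A"
    using G2.F1[OF A(1,2)] by blast
  obtain d where d: "d \<in> G1" "d2 = Phi d" using Phi_surj[OF d2(1)] by blast
  have dd: "d \<circ> d = id" using invol_iff[OF d(1)] d2(2) d(2) by simp
  have "x \<in> supp d" using R_iff[OF assms(1) d(1) dd] d2(3) d(2) by simp
  then have "y' \<in> supp d2" using R_iff[OF assms(2) d(1) dd] d(2) by simp
  then show False using d2(4) A(3) by blast
qed

lemma K3':
  assumes "R x y" "R x' y"
  shows "x = x'"
proof (rule ccontr)
  assume "x \<noteq> x'"
  then obtain A where A: "clopen_set A" "x \<in> A" "x' \<notin> A" using G1.sep_clopen by blast
  obtain d where d: "d \<in> G1" "d \<circ> d = id" "x \<in> supp d" "supp d \<subseteq> A"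
    using G1.F1[OF A(1,2)] by blast
  have "y \<in> supp (Phi d)" using R_iff[OF assms(1) d(1,2)] d(3) by simp
  then have "x' \<in> supp d" using R_iff[OF assms(2) d(1,2)] by simp
  then show False using d(4) A(3) by blast
qed

definition phi :: "'a \<Rightarrow> 'b" where
  "phi x = (THE y. R x y)"

lemma R_phi: "R x (phi x)"
proof -
  obtain y where "R x y" using K1 by blast
  then have "R x (THE y. R x y)" by (rule theI) (erule K3[OF _ \<open>R x y\<close>])
  then show ?thesis unfolding phi_def .
qed

lemma phi_eq: "R x y \<Longrightarrow> phi x = y"
  using K3 R_phi by blast

lemma phi_supp: "a \<in> G1 \<Longrightarrow> a \<circ> a = id \<Longrightarrow> phi x \<in> supp (Phi a) \<longleftrightarrow> x \<in> supp a"
  using R_iff[OF R_phi] by blast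

lemma inj_phi: "inj phi"
  using K3' R_phi by (metis injI)

lemma cont_phi: "continuous_on UNIV phi"
  unfolding continuous_on_open_vimage[OF open_UNIV]
proof (intro allI impI)
  fix B :: "'b set" assume oB: "open B"
  show "open (phi -` B \<inter> UNIV)"
    unfolding open_subopen[of "phi -` B \<inter> UNIV"]
  proof
    fix x assume "x \<in> phi -` B \<inter> UNIV"
    then have xB: "phi x \<in> B" by simp
    obtain W where W: "clopen_set W" "phi x \<in> W" "W \<subseteq> B" using G2.clopen_nbhd[OF oB xB] by meson
    obtain d2 where d2: "d2 \<in> G2" "d2 \<circ> d2 = id" "phi x \<in> supp d2" "supp d2 \<subseteq> W"
      using G2.F1[OF W(1,2)] by blast
    obtain d where d: "d \<in> G1" "d2 = Phi d" using Phi_surj[OF d2(1)] by blast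
    have dd: "d \<circ> d = id" using invol_iff[OF d(1)] d2(2) d(2) by simp
    show "\<exists>T. open T \<and> x \<in> T \<and> T \<subseteq> phi -` B \<inter> UNIV"
    proof (intro exI conjI)
      show "open (supp d)" using G1.supp_open[OF d(1)] .
      show "x \<in> supp d" using phi_supp[OF d(1) dd] d2(3) d(2) by simp
      show "supp d \<subseteq> phi -` B \<inter> UNIV"
      proof
        fix z assume "z \<in> supp d"
        then have "phi z \<in> supp d2" using phi_supp[OF d(1) dd] d(2) by simp
        then show "z \<in> phi -` B \<inter> UNIV" using d2(4) W(3) by blast
      qed
    qed
  qed
qed

lemma phi_conj:
  assumes gG: "g \<in> G1"
  shows "phi (g x) = Phi g (phi x)"
proof -
  have "R (g x) (Phi g (phi x))"
    unfolding R_def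
  proof (intro ballI impI)
    fix a assume aG: "a \<in> G1" and aa: "a \<circ> a = id" and gx: "g x \<in> supp a"
    define a' where "a' = inv g \<circ> a \<circ> g"
    have a'G: "a' \<in> G1" unfolding a'_def using G1.comp_G G1.inv_G gG aG by metis
    have a'a': "a' \<circ> a' = id"
      unfolding a'_def using G1.invl[OF gG] G1.invr[OF gG] G1.invol_app[OF aa]
      by (simp add: fun_eq_iff)
    have "x \<in> supp a'" unfolding a'_def using G1.supp_conj[OF gG] gx by simp
    then have "phi x \<in> supp (Phi a')" using phi_supp[OF a'G a'a'] by simp
    moreover have "Phi a' = inv (Phi g) \<circ> Phi a \<circ> Phi g"
      unfolding a'_def using Phi_comp Phi_inv G1.comp_G G1.inv_G gG aG by metis
    ultimately show "Phi g (phi x) \<in> supp (Phi a)"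
      using G2.supp_conj[OF PhiG[OF gG]] by simp
  qed
  then show ?thesis using phi_eq by simp
qed

end


theorem theorem6p6:
  fixes \<Gamma>1 :: "('a::topological_space \<Rightarrow> 'a) set"
    and \<Gamma>2 :: "('b::topological_space \<Rightarrow> 'b) set"
    and \<Phi> :: "('a \<Rightarrow> 'a) \<Rightarrow> ('b \<Rightarrow> 'b)"
  assumes "class_KF \<Gamma>1" and "class_KF \<Gamma>2" and "group_iso \<Phi> \<Gamma>1 \<Gamma>2"
  shows "\<exists>\<phi> :: 'a \<Rightarrow> 'b. homeomorphism UNIV UNIV \<phi> (inv \<phi>) \<and>
           (\<forall>\<gamma>\<in>\<Gamma>1. \<Phi> \<gamma> = \<phi> \<circ> \<gamma> \<circ> inv \<phi>)"
proof -
  interpret A: KFiso \<Gamma>1 \<Gamma>2 \<Phi>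
    using assms by (simp add: KFiso_def KF_def KFiso_axioms_def)
  define \<Psi> where "\<Psi> = inv_into \<Gamma>1 \<Phi>"
  have injP: "inj_on \<Phi> \<Gamma>1" using A.bijP unfolding bij_betw_def by (elim conjE)
  have imP: "\<Phi> ` \<Gamma>1 = \<Gamma>2" using A.bijP unfolding bij_betw_def by (elim conjE)
  have PsiP: "\<Psi> (\<Phi> f) = f" if "f \<in> \<Gamma>1" for f
    unfolding \<Psi>_def using inv_into_f_f[OF injP that] .
  have PPsi: "\<Phi> (\<Psi> g) = g" if "g \<in> \<Gamma>2" for g
    unfolding \<Psi>_def using f_inv_into_f[of g \<Phi> \<Gamma>1] that imP by simp
  have PsiG: "\<Psi> g \<in> \<Gamma>1" if "g \<in> \<Gamma>2" for g
    unfolding \<Psi>_def using inv_into_into[of g \<Phi> \<Gamma>1] that imP by simp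
  have biPsi: "bij_betw \<Psi> \<Gamma>2 \<Gamma>1" unfolding \<Psi>_def using bij_betw_inv_into[OF A.bijP] .
  have homPsi: "\<Psi> (g \<circ> h) = \<Psi> g \<circ> \<Psi> h" if "g \<in> \<Gamma>2" "h \<in> \<Gamma>2" for g h
  proof -
    have "\<Phi> (\<Psi> g \<circ> \<Psi> h) = g \<circ> h" using A.Phi_comp PsiG PPsi that by simp
    then have "\<Psi> (g \<circ> h) = \<Psi> (\<Phi> (\<Psi> g \<circ> \<Psi> h))" by simp
    also have "\<dots> = \<Psi> g \<circ> \<Psi> h" using PsiP A.G1.comp_G PsiG that by simp
    finally show ?thesis .
  qed
  have isoPsi: "group_iso \<Psi> \<Gamma>2 \<Gamma>1" unfolding group_iso_def using biPsi homPsi by simp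
  interpret B: KFiso \<Gamma>2 \<Gamma>1 \<Psi>
    using assms isoPsi by (simp add: KFiso_def KF_def KFiso_axioms_def)
  have AB: "A.phi (B.phi y) = y" for y
  proof (rule A.phi_eq)
    show "A.R (B.phi y) y"
      unfolding A.R_def
    proof (intro ballI impI)
      fix a assume aG: "a \<in> \<Gamma>1" and aa: "a \<circ> a = id" and ya: "B.phi y \<in> supp a"
      have PaG: "\<Phi> a \<in> \<Gamma>2" using A.PhiG[OF aG] .
      have Paa: "\<Phi> a \<circ> \<Phi> a = id" using A.invol_iff[OF aG] aa by simp
      show "y \<in> supp (\<Phi> a)" using B.phi_supp[OF PaG Paa, of y] PsiP[OF aG] ya by simp
    qed
  qed
  have BA: "B.phi (A.phi x) = x" for x
  proof (rule B.phi_eq)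
    show "B.R (A.phi x) x"
      unfolding B.R_def
    proof (intro ballI impI)
      fix d assume dG: "d \<in> \<Gamma>2" and dd: "d \<circ> d = id" and xd: "A.phi x \<in> supp d"
      have PdG: "\<Psi> d \<in> \<Gamma>1" using PsiG[OF dG] .
      have Pdd: "\<Psi> d \<circ> \<Psi> d = id" using B.invol_iff[OF dG] dd by simp
      show "x \<in> supp (\<Psi> d)" using A.phi_supp[OF PdG Pdd, of x] PPsi[OF dG] xd by simp
    qed
  qed
  have invphi: "inv A.phi = B.phi"
  proof
    fix y show "inv A.phi y = B.phi y" using inv_f_eq[OF A.inj_phi AB[of y]] .
  qed
  have hom: "homeomorphism UNIV UNIV A.phi B.phi"
  proof (rule homeomorphismI)
    show "continuous_on UNIV A.phi" by (rule A.cont_phi)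
    show "continuous_on UNIV B.phi" by (rule B.cont_phi)
  qed (simp_all add: AB BA)
  have conj: "\<forall>\<gamma>\<in>\<Gamma>1. \<Phi> \<gamma> = A.phi \<circ> \<gamma> \<circ> inv A.phi"
  proof
    fix \<gamma> assume gG: "\<gamma> \<in> \<Gamma>1"
    show "\<Phi> \<gamma> = A.phi \<circ> \<gamma> \<circ> inv A.phi"
    proof
      fix y
      show "\<Phi> \<gamma> y = (A.phi \<circ> \<gamma> \<circ> inv A.phi) y"
        using A.phi_conj[OF gG, of "B.phi y"] AB[of y] invphi by simp
    qed
  qed
  have hom': "homeomorphism UNIV UNIV A.phi (inv A.phi)" using hom invphi by simp
  show ?thesis by (rule exI[of _ A.phi]) (use hom' conj in simp)
qed


end
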